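(* Let $a_0\geq1$ and $a_1,a_2,\dots$ be positive integers such that $a_{2k}\leq 3a_0-2$ for all $k\geq1$. Let $\ell=[a_0;a_1,a_2,\dots]$ (an irrational number) and $\theta=e^{2/\ell}$. Then $\mathcal A_\theta=\emptyset$.
   Context: $\lfloor x\rfloor$ is the floor of $x$; $\log$ is the natural logarithm. For real $\theta>1$ and positive integer $n$, $M'_\theta(n)=\left\lfloor 1/(\theta^{1/n}-1)\right\rfloor$, and $\mathcal A_\theta=\{n\in\mathbb N: M'_\theta(n)\neq \lfloor n/\log\theta-1/2\rfloor\}$, where $\mathbb N$ is the set of positive integers. $[a_0;a_1,a_2,\dots]$ denotes an infinite simple continued fraction. *)

theory Defs
  imports Complex_Main
begin

text \<open>Finite continued fraction [a_k; a_(k+1), ..., a_(k+n)].\<close>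
fun cf_aux :: "(nat \<Rightarrow> nat) \<Rightarrow> nat \<Rightarrow> nat \<Rightarrow> real" where
  "cf_aux a k 0 = real (a k)"
| "cf_aux a k (Suc n) = real (a k) + 1 / cf_aux a (Suc k) n"

definition cf_conv :: "(nat \<Rightarrow> nat) \<Rightarrow> nat \<Rightarrow> real" where
  "cf_conv a n = cf_aux a 0 n"

definition cfrac_value :: "(nat \<Rightarrow> nat) \<Rightarrow> real" where
  "cfrac_value a = lim (cf_conv a)"

definition M' :: "real \<Rightarrow> nat \<Rightarrow> int" where
  "M' \<theta> n = \<lfloor>1 / (\<theta> powr (1 / real n) - 1)\<rfloor>"

definition A_set :: "real \<Rightarrow> nat set" where
  "A_set \<theta> = {n. n \<ge> 1 \<and> M' \<theta> n \<noteq> \<lfloor>real n / ln \<theta> - 1/2\<rfloor>}"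

end

theory Submission
  imports Defs
begin


lemma cf_aux_bounds:
  assumes b1: "\<And>i. b i \<ge> (1::nat)"
  shows "real (b k) \<le> cf_aux b k n \<and> cf_aux b k n \<le> real (b k) + 1"
proof (induction n arbitrary: k)
  case 0 then show ?case by simp
next
  case (Suc n)
  have h: "cf_aux b (Suc k) n \<ge> 1" using Suc[of "Suc k"] b1[of "Suc k"] by linarith
  then have "0 < 1 / cf_aux b (Suc k) n" "1 / cf_aux b (Suc k) n \<le> 1" by auto
  then show ?case by simp
qed

lemma cf_aux_contr:
  assumes b1: "\<And>i. b i \<ge> (1::nat)"
  shows "\<bar>cf_aux b k (2*m+i) - cf_aux b k (2*m+j)\<bar> \<le> (1/4)^m"
proof (induction m arbitrary: k i j)
  case 0
  then show ?case using cf_aux_bounds[of b k i, OF b1] cf_aux_bounds[of b k j, OF b1] by (simp add: abs_le_iff)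
next
  case (Suc m)
  define A' where "A' = cf_aux b (Suc (Suc k)) (2*m+i)"
  define B' where "B' = cf_aux b (Suc (Suc k)) (2*m+j)"
  define c where "c = real (b (Suc k))"
  have c1: "c \<ge> 1" using b1[of "Suc k"] unfolding c_def by simp
  have A1: "A' \<ge> 1" using cf_aux_bounds[of b "Suc (Suc k)" "2*m+i", OF b1] b1[of "Suc(Suc k)"] unfolding A'_def by linarith
  have B1: "B' \<ge> 1" using cf_aux_bounds[of b "Suc (Suc k)" "2*m+j", OF b1] b1[of "Suc(Suc k)"] unfolding B'_def by linarith
  have IH: "\<bar>A' - B'\<bar> \<le> (1/4)^m" using Suc[of "Suc (Suc k)" i j] unfolding A'_def B'_def by simp
  have eA: "2 * Suc m + i = Suc (Suc (2*m+i))" and eB: "2 * Suc m + j = Suc (Suc (2*m+j))" by simp_all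
  define A where "A = c + 1/A'"
  define B where "B = c + 1/B'"
  have AA: "A * A' = c * A' + 1" unfolding A_def using A1 by (simp add: field_simps)
  have BB: "B * B' = c * B' + 1" unfolding B_def using B1 by (simp add: field_simps)
  have "c * A' \<ge> 1 * A'" using c1 A1 by (intro mult_right_mono) auto
  then have AA2: "A * A' \<ge> 2" using AA A1 by linarith
  have "c * B' \<ge> 1 * B'" using c1 B1 by (intro mult_right_mono) auto
  then have BB2: "B * B' \<ge> 2" using BB B1 by linarith
  have Apos: "A > 0" "B > 0" using A1 B1 c1 unfolding A_def B_def by (simp_all add: add_pos_pos)
  have e1: "cf_aux b k (2 * Suc m + i) - cf_aux b k (2 * Suc m + j) = 1/A - 1/B"
    unfolding eA eB by (simp add: A'_def[symmetric] B'_def[symmetric] c_def[symmetric] A_def[symmetric] B_def[symmetric])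
  have e2: "1/A - 1/B = (B - A)/(A*B)" using Apos by (simp add: divide_simps)
  have e3: "B - A = (A' - B')/(A'*B')" unfolding A_def B_def using A1 B1 by (simp add: divide_simps algebra_simps)
  have diff: "cf_aux b k (2 * Suc m + i) - cf_aux b k (2 * Suc m + j) = (A' - B') / ((A*A')*(B*B'))"
    unfolding e1 e2 e3 by (simp add: ac_simps)
  have p4: "(A*A')*(B*B') \<ge> 2*2" using AA2 BB2 by (intro mult_mono) auto
  have "\<bar>(A' - B') / ((A*A')*(B*B'))\<bar> = \<bar>A' - B'\<bar> / ((A*A')*(B*B'))" using p4 by simp
  also have "\<dots> \<le> \<bar>A' - B'\<bar> / 4" using p4 by (intro divide_left_mono) auto
  also have "\<dots> \<le> (1/4)^Suc m" using IH by simp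
  finally show ?case using diff by simp
qed

lemma cf_conv_convergent:
  assumes b1: "\<And>i. b i \<ge> (1::nat)"
  shows "cf_conv b \<longlonglongrightarrow> cfrac_value b"
proof -
  have "Cauchy (cf_conv b)"
    unfolding Cauchy_def
  proof (intro allI impI)
    fix e :: real assume e: "e > 0"
    obtain m where m: "(1/4::real)^m < e" using real_arch_pow_inv[OF e, of "1/4"] by auto
    show "\<exists>M. \<forall>p\<ge>M. \<forall>q\<ge>M. dist (cf_conv b p) (cf_conv b q) < e"
    proof (intro exI allI impI)
      fix p q assume "p \<ge> 2*m" "q \<ge> 2*m"
      then have "p = 2*m + (p - 2*m)" "q = 2*m + (q-2*m)" by auto
      then have "dist (cf_conv b p) (cf_conv b q) \<le> (1/4)^m"
        using cf_aux_contr[of b 0 m "p-2*m" "q-2*m", OF b1] unfolding cf_conv_def dist_real_def by metis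
      then show "dist (cf_conv b p) (cf_conv b q) < e" using m by linarith
    qed
  qed
  then show ?thesis unfolding cfrac_value_def using Cauchy_convergent_iff convergent_LIMSEQ_iff by blast
qed

lemma cfrac_value_ge:
  assumes b1: "\<And>i. b i \<ge> (1::nat)"
  shows "cfrac_value b \<ge> real (b 0)"
  by (rule LIMSEQ_le_const[OF cf_conv_convergent[OF b1]])
     (use cf_aux_bounds[of b 0, OF b1] in \<open>auto simp: cf_conv_def\<close>)

lemma cf_aux_shift: "cf_aux b (Suc k) n = cf_aux (\<lambda>i. b (Suc i)) k n"
  by (induction n arbitrary: k) auto

lemma cfrac_value_rec:
  assumes b1: "\<And>i. b i \<ge> (1::nat)"
  shows "cfrac_value b = real (b 0) + 1 / cfrac_value (\<lambda>i. b (Suc i))"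
proof -
  let ?b' = "\<lambda>i. b (Suc i)"
  have b1': "\<And>i. ?b' i \<ge> 1" using b1 by simp
  have L': "cf_conv ?b' \<longlonglongrightarrow> cfrac_value ?b'" by (rule cf_conv_convergent[OF b1'])
  have g: "cfrac_value ?b' \<ge> 1" using cfrac_value_ge[of ?b', OF b1'] b1[of 1] by simp
  have "(\<lambda>m. real (b 0) + 1 / cf_conv ?b' m) \<longlonglongrightarrow> real (b 0) + 1 / cfrac_value ?b'"
    using g by (intro tendsto_intros L') auto
  moreover have "(\<lambda>m. real (b 0) + 1 / cf_conv ?b' m) = (\<lambda>m. cf_conv b (Suc m))"
    by (auto simp: cf_conv_def cf_aux_shift)
  moreover have "(\<lambda>m. cf_conv b (Suc m)) \<longlonglongrightarrow> cfrac_value b"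
    by (rule LIMSEQ_Suc[OF cf_conv_convergent[OF b1]])
  ultimately show ?thesis using LIMSEQ_unique by metis
qed



lemma nonneg_by_deriv:
  fixes f f' :: "real \<Rightarrow> real"
  assumes "\<And>x. (f has_real_derivative f' x) (at x)" "\<And>x. x \<ge> 0 \<Longrightarrow> f' x \<ge> 0" "f 0 = 0" "u \<ge> 0"
  shows "f u \<ge> 0"
  using DERIV_nonneg_imp_nondecreasing[of 0 u f] assms by force

lemma exp_lower_aux: "u \<ge> 0 \<Longrightarrow> (2 - u) * exp u \<le> 2 + (u::real)"
proof -
  assume u: "u \<ge> 0"
  have g1: "1 + (x - 1) * exp x \<ge> 0" if "x \<ge> 0" for x :: real
    by (rule nonneg_by_deriv[where f="\<lambda>x. 1 + (x - 1) * exp x" and f'="\<lambda>x. x * exp x"])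
       (fastforce intro!: derivative_eq_intros simp: algebra_simps power2_eq_square,
        simp, simp, use that in simp)
  have "2 + u - (2 - u) * exp u \<ge> 0"
    by (rule nonneg_by_deriv[where f="\<lambda>x. 2 + x - (2 - x) * exp x" and f'="\<lambda>x. 1 + (x - 1) * exp x"])
       (fastforce intro!: derivative_eq_intros simp: algebra_simps power2_eq_square,
        use g1 in blast, simp, use u in simp)
  then show ?thesis by simp
qed

lemma exp_upper_aux: "u \<ge> 0 \<Longrightarrow> exp u * (u^2 - 6*u + 12) \<ge> u^2 + 6*u + (12::real)"
proof -
  assume u: "u \<ge> 0"
  have f3: "exp x * (x^2 - 2*x + 2) - 2 \<ge> 0" if "x \<ge> 0" for x :: real
    by (rule nonneg_by_deriv[where f="\<lambda>x. exp x * (x^2 - 2*x + 2) - 2" and f'="\<lambda>x. exp x * x^2"])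
       (fastforce intro!: derivative_eq_intros simp: algebra_simps power2_eq_square,
        simp, simp, use that in simp)
  have f2: "exp x * (x^2 - 4*x + 6) - 2*x - 6 \<ge> 0" if "x \<ge> 0" for x :: real
    by (rule nonneg_by_deriv[where f="\<lambda>x. exp x * (x^2 - 4*x + 6) - 2*x - 6" and f'="\<lambda>x. exp x * (x^2 - 2*x + 2) - 2"])
       (fastforce intro!: derivative_eq_intros simp: algebra_simps power2_eq_square,
        use f3 in blast, simp, use that in simp)
  have "exp u * (u^2 - 6*u + 12) - (u^2 + 6*u + 12) \<ge> 0"
    by (rule nonneg_by_deriv[where f="\<lambda>x. exp x * (x^2 - 6*x + 12) - (x^2 + 6*x + 12)" and f'="\<lambda>x. exp x * (x^2 - 4*x + 6) - 2*x - 6"])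
       (fastforce intro!: derivative_eq_intros simp: algebra_simps power2_eq_square,
        use f2 in blast, simp, use u in simp)
  then show ?thesis by simp
qed

lemma exp_bounds:
  fixes u :: real assumes u: "u > 0"
  shows "1/u - 1/2 \<le> 1/(exp u - 1)" "1/(exp u - 1) \<le> 1/u - 1/2 + u/12"
proof -
  have E: "exp u - 1 > 0" using u by simp
  have l: "(2 - u) * exp u \<le> 2 + u" using exp_lower_aux u by simp
  have "(2 - u) * (exp u - 1) \<le> 2 * u" using l by (simp add: algebra_simps)
  then have "(2 - u) / (2*u) \<le> 1 / (exp u - 1)" using E u by (simp add: divide_simps mult.commute)
  moreover have "1/u - 1/2 = (2 - u) / (2*u)" using u by (simp add: field_simps)
  ultimately show "1/u - 1/2 \<le> 1/(exp u - 1)" by simp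
  have up: "exp u * (u^2 - 6*u + 12) \<ge> u^2 + 6*u + 12" using exp_upper_aux u by simp
  have "12 * u \<le> (exp u - 1) * (u^2 - 6*u + 12)" using up by (simp add: algebra_simps)
  then have "1 / (exp u - 1) \<le> (u^2 - 6*u + 12) / (12 * u)" using E u by (simp add: divide_simps mult.commute)
  moreover have "1/u - 1/2 + u/12 = (u^2 - 6*u + 12) / (12 * u)" using u by (simp add: field_simps power2_eq_square)
  ultimately show "1/(exp u - 1) \<le> 1/u - 1/2 + u/12" by simp
qed


lemma tail_rec:
  assumes a1: "\<And>i. a i \<ge> (1::nat)"
  shows "cfrac_value (\<lambda>i. a (i + j)) = real (a j) + 1 / cfrac_value (\<lambda>i. a (i + Suc j))"
  using cfrac_value_rec[of "\<lambda>i. a (i + j)"] a1 by simp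

lemma tail_ge:
  assumes a1: "\<And>i. a i \<ge> (1::nat)"
  shows "cfrac_value (\<lambda>i. a (i + j)) \<ge> real (a j)"
  using cfrac_value_ge[of "\<lambda>i. a (i + j)"] a1 by simp

lemma tail_ge1:
  assumes a1: "\<And>i. a i \<ge> (1::nat)"
  shows "cfrac_value (\<lambda>i. a (i + j)) \<ge> 1"
  using tail_ge[of a j, OF a1] a1[of j] by linarith

lemma tail_le:
  assumes a1: "\<And>i. a i \<ge> (1::nat)"
  shows "cfrac_value (\<lambda>i. a (i + j)) \<le> real (a j) + 1"
proof -
  have "cfrac_value (\<lambda>i. a (i + Suc j)) \<ge> 1" by (rule tail_ge1[OF a1])
  then have "1 / cfrac_value (\<lambda>i. a (i + Suc j)) \<le> 1" by simp
  then show ?thesis using tail_rec[of a j, OF a1] by linarith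
qed

lemma descent:
  assumes a1: "\<And>i. a i \<ge> (1::nat)"
    and ab: "\<And>k. k \<ge> 1 \<Longrightarrow> real (a (2*k)) \<le> 3 * real (a 0) - 2"
  shows "n \<ge> 1 \<Longrightarrow> real_of_int q > real n * cfrac_value (\<lambda>i. a (i + 2*k)) \<Longrightarrow>
    real n * (real_of_int q - real n * cfrac_value (\<lambda>i. a (i + 2*k))) \<ge> 1 / (3 * real (a 0))"
proof (induction n arbitrary: k q rule: less_induct)
  case (less n)
  define X where "X = cfrac_value (\<lambda>i. a (i + 2*k))"
  define Y where "Y = cfrac_value (\<lambda>i. a (i + Suc (2*k)))"
  define Z where "Z = cfrac_value (\<lambda>i. a (i + 2*Suc k))"
  define A0 where "A0 = real (a (2*k))"
  define A1 where "A1 = real (a (Suc (2*k)))"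
  define N where "N = real n"
  define c where "c = 1 / (3 * real (a 0))"
  have A11: "A1 \<ge> 1" "A0 \<ge> 1" unfolding A1_def A0_def using a1 by (auto simp: Suc_le_eq)
  have XY: "X = A0 + 1/Y" unfolding X_def Y_def A0_def by (rule tail_rec[OF a1])
  have YZ: "Y = A1 + 1/Z" unfolding Z_def Y_def A1_def using tail_rec[of a "Suc (2*k)", OF a1] by simp
  have Z1: "Z \<ge> 1" "Y \<ge> 1" unfolding Z_def Y_def by (rule tail_ge1[OF a1])+
  have Zle: "Z \<le> real (a (2 * Suc k)) + 1" unfolding Z_def using tail_le[of a "2 * Suc k", OF a1] by simp
  have a0: "real (a 0) \<ge> 1" using a1[of 0] by simp
  have Zle2: "Z \<le> 3 * real (a 0) - 1" using Zle ab[of "Suc k"] by simp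
  have N1: "N \<ge> 1" using less.prems unfolding N_def by simp
  define m where "m = q - int (a (2*k)) * int n"
  define r where "r = int n - int (a (Suc (2*k))) * m"
  define rm where "rm = real_of_int m"
  define rr where "rr = real_of_int r"
  have rm: "rm = real_of_int q - A0 * N" unfolding rm_def m_def A0_def N_def by simp
  have rr: "rr = N - A1 * rm" unfolding rr_def r_def rm_def A1_def N_def by simp
  define d where "d = real_of_int q - N * X"
  have d0: "d > 0" using less.prems unfolding d_def N_def X_def by simp
  have "N / Y > 0" using N1 Z1 by simp
  then have "rm > 0" using d0 unfolding d_def rm XY by (simp add: algebra_simps)
  then have m1: "m \<ge> 1" unfolding rm_def by simp
  then have rm1: "rm \<ge> 1" unfolding rm_def by simp
  define P where "P = Y * Z"
  have P: "P = A1 * Z + 1" unfolding P_def YZ using Z1 by (simp add: field_simps)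
  have Ppos: "P > 0" using P A11 Z1 by (simp add: add_pos_pos)
  define d' where "d' = rm - rr * Z"
  have dd: "d = d' / P"
  proof -
    have "d = rm - N / Y" unfolding d_def XY rm by (simp add: algebra_simps)
    also have "N / Y = N * Z / P" unfolding P_def using Z1 by simp
    finally have "d * P = rm * P - N * Z" using Ppos by (simp add: field_simps)
    also have "\<dots> = d'" unfolding d'_def P rr by (simp add: algebra_simps)
    finally show ?thesis using Ppos by (simp add: field_simps)
  qed
  have NN: "N = A1 * d' + rr * P" unfolding d'_def P rr by (simp add: algebra_simps)
  have key: "N * d = rr * d' + A1 * d'^2 / P"
    unfolding dd NN using Ppos by (simp add: field_simps power2_eq_square)
  have goal: "N * d \<ge> c"
  proof (cases "r \<ge> 1")
    case True
    then have rr1: "rr \<ge> 1" unfolding rr_def by simp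
    have d'0: "d' > 0" using dd d0 Ppos by (simp add: zero_less_divide_iff)
    define r' where "r' = nat r"
    have r'r: "real r' = rr" unfolding r'_def rr_def using True by simp
    have "A1 * rm \<ge> 1 * 1" using rm1 A11 by (intro mult_mono) auto
    then have "real r' < real n" using r'r rr unfolding N_def by linarith
    then have lt: "r' < n" by simp
    have r'1: "r' \<ge> 1" using True unfolding r'_def by simp
    have gt: "real_of_int m > real r' * Z" using d'0 unfolding d'_def r'r rm_def by simp
    have IH: "real r' * (real_of_int m - real r' * Z) \<ge> c"
      using less.IH[OF lt r'1, of "Suc k" m] gt unfolding Z_def c_def by simp
    then have "rr * d' \<ge> c" unfolding d'_def r'r rm_def .
    moreover have "A1 * d'^2 / P \<ge> 0" using A11 Ppos by simp
    ultimately show ?thesis using key by linarith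
  next
    case False
    show ?thesis
    proof (cases "r = 0")
      case True
      then have rr0: "rr = 0" unfolding rr_def by simp
      have Nd: "N * d = A1 * rm^2 / P" using key rr0 unfolding d'_def by simp
      have "rm^2 \<ge> 1" using rm1 by (simp add: one_le_power)
      then have "A1 * rm^2 / P \<ge> A1 / P" using A11 Ppos by (simp add: divide_right_mono)
      moreover have "A1 / P \<ge> 1 / (Z + 1)"
        using A11 Z1 Ppos unfolding P by (simp add: divide_simps algebra_simps)
      moreover have "1 / (Z + 1) \<ge> c" unfolding c_def using Zle2 Z1 a0
        by (simp add: divide_simps)
      ultimately show ?thesis using Nd by linarith
    next
      case False2: False
      define s where "s = - rr"
      have s1: "s \<ge> 1" using False False2 unfolding s_def rr_def by simp
      have Ns: "N = A1 * rm - s" using rr unfolding s_def by simp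
      have d's: "d' = rm + s * Z" unfolding d'_def s_def by simp
      have "A1 \<le> A1 * rm" using A11 rm1 by (simp add: mult_le_cancel_left1)
      then have "A1 \<le> N + s" using Ns by simp
      then have h1: "A1 * Z \<le> (N + s) * Z" using Z1 by (simp add: mult_right_mono)
      have "N * s \<ge> N * 1" using N1 s1 by (intro mult_left_mono) auto
      moreover have "N * s \<ge> 1 * s" using N1 s1 by (intro mult_right_mono) auto
      ultimately have "N + s \<le> 2 * N * s" by simp
      then have h2: "(N + s) * Z \<le> 2 * N * s * Z" using Z1 by (simp add: mult_right_mono)
      have "N * rm \<ge> 1 * 1" using N1 rm1 by (intro mult_mono) auto
      then have h3: "1 \<le> 2 * N * rm" by simp
      have "P \<le> 2 * N * d'" unfolding P d's using h1 h2 h3 by (simp add: algebra_simps)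
      then have "N * d \<ge> 1/2" unfolding dd using Ppos by (simp add: divide_simps)
      moreover have "c \<le> 1/2" unfolding c_def using a0 by (simp add: divide_simps)
      ultimately show ?thesis by linarith
    qed
  qed
  then show ?case unfolding c_def d_def N_def X_def .
qed



theorem mainTheorem6:
  fixes a :: "nat \<Rightarrow> nat" and l \<theta> :: real
  assumes "a 0 \<ge> 1"
    and "\<And>k. k \<ge> 1 \<Longrightarrow> a k > 0"
    and "\<And>k. k \<ge> 1 \<Longrightarrow> a (2 * k) \<le> 3 * a 0 - 2"
    and "l = cfrac_value a"
    and "\<theta> = exp (2 / l)"
  shows "A_set \<theta> = {}"
proof -
  have a1: "\<And>i. a i \<ge> 1"
  proof -
    fix i show "a i \<ge> 1" using assms(1) assms(2)[of i] by (cases i) auto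
  qed
  have ab: "\<And>k. k \<ge> 1 \<Longrightarrow> real (a (2*k)) \<le> 3 * real (a 0) - 2"
  proof -
    fix k :: nat assume "k \<ge> 1"
    then have "a (2*k) \<le> 3 * a 0 - 2" by (rule assms(3))
    then have "real (a (2*k)) \<le> real (3 * a 0 - 2)" by linarith
    also have "\<dots> = 3 * real (a 0) - 2" using assms(1) by (simp add: of_nat_diff)
    finally show "real (a (2*k)) \<le> 3 * real (a 0) - 2" .
  qed
  have l0: "l = cfrac_value (\<lambda>i. a (i + 2*0))" using assms(4) by simp
  have lrec: "l = real (a 0) + 1 / cfrac_value (\<lambda>i. a (i + Suc 0))"
    using tail_rec[of a 0, OF a1] l0 by simp
  have "cfrac_value (\<lambda>i. a (i + Suc 0)) \<ge> 1" by (rule tail_ge1[OF a1])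
  then have lgt: "l > real (a 0)" using lrec by simp
  have a0: "real (a 0) \<ge> 1" using assms(1) by simp
  have lpos: "l > 0" using lgt a0 by linarith
  show ?thesis
  proof (rule ccontr)
    assume "A_set \<theta> \<noteq> {}"
    then obtain n where n1: "n \<ge> 1" and ne: "M' \<theta> n \<noteq> \<lfloor>real n / ln \<theta> - 1/2\<rfloor>"
      unfolding A_set_def by auto
    define N where "N = real n"
    have N1: "N \<ge> 1" using n1 unfolding N_def by simp
    define u where "u = 2 / (l * N)"
    have upos: "u > 0" using lpos N1 unfolding u_def by simp
    have lnt: "ln \<theta> = 2 / l" using assms(5) by simp
    have pw: "\<theta> powr (1 / real n) = exp u" unfolding assms(5) exp_powr_real u_def N_def by simp
    have inv: "real n / ln \<theta> = 1 / u" unfolding lnt u_def N_def by simp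
    define Yv where "Yv = 1 / (exp u - 1)"
    define Xv where "Xv = 1 / u - 1/2"
    have ne2: "\<lfloor>Yv\<rfloor> \<noteq> \<lfloor>Xv\<rfloor>" using ne unfolding M'_def pw inv Yv_def Xv_def .
    have XY: "Xv \<le> Yv" "Yv \<le> Xv + u/12" using exp_bounds[OF upos] unfolding Xv_def Yv_def by auto
    have "\<lfloor>Xv\<rfloor> \<le> \<lfloor>Yv\<rfloor>" using XY by (simp add: floor_mono)
    then have lt: "\<lfloor>Xv\<rfloor> < \<lfloor>Yv\<rfloor>" using ne2 by simp
    define m where "m = \<lfloor>Yv\<rfloor>"
    have mX: "real_of_int m > Xv" using lt unfolding m_def by linarith
    have mY: "real_of_int m \<le> Xv + u/12" using XY unfolding m_def by linarith
    define q where "q = 2 * m + 1"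
    have lN: "N * l = 2 / u" unfolding u_def using lpos N1 by (simp add: field_simps)
    have qgt: "real_of_int q > N * l" unfolding q_def lN using mX unfolding Xv_def by simp
    have qle: "real_of_int q - N * l \<le> u / 6" unfolding q_def lN using mY unfolding Xv_def by simp
    have "N * (real_of_int q - N * l) \<ge> 1 / (3 * real (a 0))"
      using descent[of a, OF a1 ab, where n=n and q=q and k=0] n1 qgt l0 unfolding N_def by simp
    moreover have "N * (real_of_int q - N * l) \<le> N * (u / 6)" using qle N1 by simp
    moreover have "N * (u / 6) = 1 / (3 * l)" unfolding u_def using lpos N1 by (simp add: field_simps)
    moreover have "1 / (3 * l) < 1 / (3 * real (a 0))" using lgt a0 by (simp add: divide_simps)
    ultimately show False by linarith
  qed
qed

end
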